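(* Let $R$ be a noetherian integral domain, $n\ge1$, $R[n]=R[t]/(t^n)$, and $M$ an $R[n]$-module of finite type. Let $M^\vee=\mathrm{Hom}_{R[n]}(M,R[n])$ and let $t_M:M\to M^{\vee\vee}$ be the canonical morphism, $t_M(m)(\phi)=\phi(m)$. Then $\ker(t_M)=T(M)$.
   Context: An element $u=\sum_{i=0}^{n-1}u_it^i\in R[n]$ ($u_i\in R$) is a non-zero-divisor iff $u_0\ne0$; let $S_n$ be the set of non-zero-divisors. The torsion submodule $T(M)$ is the set of $m\in M$ such that $\alpha m=0$ for some $\alpha\in S_n$. *)

theory Defs
  imports "HOL-Algebra.Algebra"
begin

definition trunc_poly_ring :: "('a, 'm) ring_scheme \<Rightarrow> nat \<Rightarrow> (nat \<Rightarrow> 'a) set ring" where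
  "trunc_poly_ring R n = UP R Quot (PIdl\<^bsub>UP R\<^esub> (monom (UP R) \<one>\<^bsub>R\<^esub> n))"

definition self_module :: "('a, 'm) ring_scheme \<Rightarrow> ('a, 'a) module" where
  "self_module A = \<lparr>carrier = carrier A, monoid.mult = monoid.mult A, monoid.one = \<one>\<^bsub>A\<^esub>,
     ring.zero = \<zero>\<^bsub>A\<^esub>, ring.add = ring.add A, smult = monoid.mult A\<rparr>"

definition non_zero_divisors :: "('a, 'm) ring_scheme \<Rightarrow> 'a set" where
  "non_zero_divisors A = {u \<in> carrier A. \<forall>v \<in> carrier A. u \<otimes>\<^bsub>A\<^esub> v = \<zero>\<^bsub>A\<^esub> \<longrightarrow> v = \<zero>\<^bsub>A\<^esub>}"

definition torsion :: "('a, 'm) ring_scheme \<Rightarrow> ('a, 'b, 'c) module_scheme \<Rightarrow> 'b set" where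
  "torsion A M = {m \<in> carrier M. \<exists>\<alpha> \<in> non_zero_divisors A. \<alpha> \<odot>\<^bsub>M\<^esub> m = \<zero>\<^bsub>M\<^esub>}"

definition finite_type :: "('a, 'm) ring_scheme \<Rightarrow> ('a, 'b, 'c) module_scheme \<Rightarrow> bool" where
  "finite_type A M \<longleftrightarrow> (\<exists>G. finite G \<and> G \<subseteq> carrier M \<and>
     (\<forall>m \<in> carrier M. \<exists>f. f \<in> G \<rightarrow> carrier A \<and> m = (\<Oplus>\<^bsub>M\<^esub> g \<in> G. f g \<odot>\<^bsub>M\<^esub> g)))"

definition lin_hom :: "('a, 'm) ring_scheme \<Rightarrow> ('a, 'b, 'c) module_scheme \<Rightarrow> ('a, 'd, 'e) module_scheme
    \<Rightarrow> ('b \<Rightarrow> 'd) set" where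
  "lin_hom A M N = {f. f \<in> carrier M \<rightarrow> carrier N \<and> f \<in> extensional (carrier M) \<and>
     (\<forall>x \<in> carrier M. \<forall>y \<in> carrier M. f (x \<oplus>\<^bsub>M\<^esub> y) = f x \<oplus>\<^bsub>N\<^esub> f y) \<and>
     (\<forall>a \<in> carrier A. \<forall>x \<in> carrier M. f (a \<odot>\<^bsub>M\<^esub> x) = a \<odot>\<^bsub>N\<^esub> f x)}"

definition dual_hom :: "('a, 'm) ring_scheme \<Rightarrow> ('a, 'b, 'c) module_scheme \<Rightarrow> ('b \<Rightarrow> 'a) set" where
  "dual_hom A M = lin_hom A M (self_module A)"

definition can_bidual :: "('a, 'm) ring_scheme \<Rightarrow> ('a, 'b, 'c) module_scheme \<Rightarrow> 'b \<Rightarrow> (('b \<Rightarrow> 'a) \<Rightarrow> 'a)" where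
  "can_bidual A M m = (\<lambda>\<phi> \<in> dual_hom A M. \<phi> m)"

definition ker_can_bidual :: "('a, 'm) ring_scheme \<Rightarrow> ('a, 'b, 'c) module_scheme \<Rightarrow> 'b set" where
  "ker_can_bidual A M = {m \<in> carrier M. can_bidual A M m = (\<lambda>\<phi> \<in> dual_hom A M. \<zero>\<^bsub>A\<^esub>)}"

end

theory Submission
  imports Defs
begin

locale rmod = R: domain R + M: abelian_group M
  for R :: "('a, 'r) ring_scheme" (structure) and M :: "('b, 'm) ring_scheme" +
  fixes sm :: "'a \<Rightarrow> 'b \<Rightarrow> 'b"
  assumes sm_closed: "\<lbrakk>r \<in> carrier R; x \<in> carrier M\<rbrakk> \<Longrightarrow> sm r x \<in> carrier M"
    and sm_ldistr: "\<lbrakk>r \<in> carrier R; s \<in> carrier R; x \<in> carrier M\<rbrakk> \<Longrightarrow> sm (r \<oplus> s) x = sm r x \<oplus>\<^bsub>M\<^esub> sm s x"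
    and sm_rdistr: "\<lbrakk>r \<in> carrier R; x \<in> carrier M; y \<in> carrier M\<rbrakk> \<Longrightarrow> sm r (x \<oplus>\<^bsub>M\<^esub> y) = sm r x \<oplus>\<^bsub>M\<^esub> sm r y"
    and sm_assoc: "\<lbrakk>r \<in> carrier R; s \<in> carrier R; x \<in> carrier M\<rbrakk> \<Longrightarrow> sm (r \<otimes> s) x = sm r (sm s x)"
    and sm_one: "x \<in> carrier M \<Longrightarrow> sm \<one> x = x"
begin

lemma sm_zero_l: "x \<in> carrier M \<Longrightarrow> sm \<zero> x = \<zero>\<^bsub>M\<^esub>"
proof -
  assume x: "x \<in> carrier M"
  have "sm \<zero> x = sm \<zero> x \<oplus>\<^bsub>M\<^esub> sm \<zero> x"
    using sm_ldistr[of \<zero> \<zero> x] x by simp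
  then show ?thesis using x sm_closed[of \<zero> x]
    by (metis M.add.r_cancel_one' M.zero_closed R.zero_closed M.r_zero)
qed

lemma sm_zero_r: "r \<in> carrier R \<Longrightarrow> sm r \<zero>\<^bsub>M\<^esub> = \<zero>\<^bsub>M\<^esub>"
proof -
  assume r: "r \<in> carrier R"
  have "sm r \<zero>\<^bsub>M\<^esub> = sm r \<zero>\<^bsub>M\<^esub> \<oplus>\<^bsub>M\<^esub> sm r \<zero>\<^bsub>M\<^esub>"
    using sm_rdistr[of r "\<zero>\<^bsub>M\<^esub>" "\<zero>\<^bsub>M\<^esub>"] r by simp
  then show ?thesis using r sm_closed[of r "\<zero>\<^bsub>M\<^esub>"]
    by (metis M.add.r_cancel_one' M.zero_closed)
qed

lemma sm_neg_l: "\<lbrakk>r \<in> carrier R; x \<in> carrier M\<rbrakk> \<Longrightarrow> sm (\<ominus> r) x = \<ominus>\<^bsub>M\<^esub> sm r x"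
proof -
  assume r: "r \<in> carrier R" and x: "x \<in> carrier M"
  have "sm (\<ominus> r) x \<oplus>\<^bsub>M\<^esub> sm r x = \<zero>\<^bsub>M\<^esub>"
    using sm_ldistr[of "\<ominus> r" r x] r x by (simp add: R.l_neg sm_zero_l)
  then show ?thesis using r x sm_closed
    by (metis M.add.inv_equality R.add.inv_closed)
qed

lemma sm_comm: "\<lbrakk>r \<in> carrier R; s \<in> carrier R; x \<in> carrier M\<rbrakk> \<Longrightarrow> sm r (sm s x) = sm s (sm r x)"
  by (metis R.m_comm sm_assoc)

primrec lsp :: "'b list \<Rightarrow> 'b set" where
  "lsp [] = {\<zero>\<^bsub>M\<^esub>}"
| "lsp (g # gs) = {s \<oplus>\<^bsub>M\<^esub> sm r g | s r. s \<in> lsp gs \<and> r \<in> carrier R}"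

lemma lsp_carrier: "set L \<subseteq> carrier M \<Longrightarrow> lsp L \<subseteq> carrier M"
proof (induction L)
  case Nil then show ?case by simp
next
  case (Cons g gs)
  then have "g \<in> carrier M" "lsp gs \<subseteq> carrier M" by auto
  then show ?case using sm_closed by fastforce
qed

lemma lsp_zero: "set L \<subseteq> carrier M \<Longrightarrow> \<zero>\<^bsub>M\<^esub> \<in> lsp L"
proof (induction L)
  case Nil then show ?case by simp
next
  case (Cons g gs)
  then have "\<zero>\<^bsub>M\<^esub> = \<zero>\<^bsub>M\<^esub> \<oplus>\<^bsub>M\<^esub> sm \<zero> g" by (simp add: sm_zero_l)
  then show ?case using Cons by auto
qed

lemma lsp_add: "set L \<subseteq> carrier M \<Longrightarrow> x \<in> lsp L \<Longrightarrow> y \<in> lsp L \<Longrightarrow> x \<oplus>\<^bsub>M\<^esub> y \<in> lsp L"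
proof (induction L arbitrary: x y)
  case Nil then show ?case by simp
next
  case (Cons g gs)
  from Cons.prems obtain s1 r1 where 1: "x = s1 \<oplus>\<^bsub>M\<^esub> sm r1 g" "s1 \<in> lsp gs" "r1 \<in> carrier R" by auto
  from Cons.prems obtain s2 r2 where 2: "y = s2 \<oplus>\<^bsub>M\<^esub> sm r2 g" "s2 \<in> lsp gs" "r2 \<in> carrier R" by auto
  have g: "g \<in> carrier M" using Cons.prems by auto
  have c: "s1 \<in> carrier M" "s2 \<in> carrier M" using 1 2 lsp_carrier Cons.prems by auto
  have sc: "sm r1 g \<in> carrier M" "sm r2 g \<in> carrier M" using 1 2 g sm_closed by auto
  have "x \<oplus>\<^bsub>M\<^esub> y = (s1 \<oplus>\<^bsub>M\<^esub> s2) \<oplus>\<^bsub>M\<^esub> (sm r1 g \<oplus>\<^bsub>M\<^esub> sm r2 g)"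
    using 1 2 c sc by (simp add: M.a_ac)
  also have "\<dots> = (s1 \<oplus>\<^bsub>M\<^esub> s2) \<oplus>\<^bsub>M\<^esub> sm (r1 \<oplus> r2) g"
    using 1 2 g by (simp add: sm_ldistr)
  finally have "x \<oplus>\<^bsub>M\<^esub> y = (s1 \<oplus>\<^bsub>M\<^esub> s2) \<oplus>\<^bsub>M\<^esub> sm (r1 \<oplus> r2) g" .
  moreover have "s1 \<oplus>\<^bsub>M\<^esub> s2 \<in> lsp gs" using Cons 1 2 by auto
  ultimately show ?case using 1 2 by auto
qed

lemma lsp_sm: "set L \<subseteq> carrier M \<Longrightarrow> x \<in> lsp L \<Longrightarrow> a \<in> carrier R \<Longrightarrow> sm a x \<in> lsp L"
proof (induction L arbitrary: x)
  case Nil then show ?case by (simp add: sm_zero_r)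
next
  case (Cons g gs)
  from Cons.prems obtain s1 r1 where 1: "x = s1 \<oplus>\<^bsub>M\<^esub> sm r1 g" "s1 \<in> lsp gs" "r1 \<in> carrier R" by auto
  have g: "g \<in> carrier M" using Cons.prems by auto
  have c: "s1 \<in> carrier M" using 1 lsp_carrier Cons.prems by auto
  have "sm a x = sm a s1 \<oplus>\<^bsub>M\<^esub> sm (a \<otimes> r1) g"
    using 1 g c Cons.prems by (simp add: sm_rdistr sm_closed sm_assoc)
  moreover have "sm a s1 \<in> lsp gs" using Cons 1 by auto
  ultimately show ?case using 1 Cons.prems by auto
qed

lemma lsp_mono: "set L \<subseteq> carrier M \<Longrightarrow> g \<in> carrier M \<Longrightarrow> lsp L \<subseteq> lsp (L @ [g])"
proof (induction L)
  case Nil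
  have "\<zero>\<^bsub>M\<^esub> = \<zero>\<^bsub>M\<^esub> \<oplus>\<^bsub>M\<^esub> sm \<zero> g" using Nil by (simp add: sm_zero_l)
  then have "\<zero>\<^bsub>M\<^esub> \<in> lsp [g]" by (auto intro!: exI[of _ "\<zero>"])
  then show ?case by simp
next
  case (Cons a L)
  then have "lsp L \<subseteq> lsp (L @ [g])" by simp
  then show ?case by auto
qed


lemma lsp_gen: "set L \<subseteq> carrier M \<Longrightarrow> g \<in> set L \<Longrightarrow> g \<in> lsp L"
proof (induction L)
  case Nil then show ?case by simp
next
  case (Cons a L)
  show ?case
  proof (cases "g = a")
    case True
    have "g = \<zero>\<^bsub>M\<^esub> \<oplus>\<^bsub>M\<^esub> sm \<one> a" using True Cons.prems by (simp add: sm_one)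
    moreover have "\<zero>\<^bsub>M\<^esub> \<in> lsp L" using Cons.prems lsp_zero by auto
    ultimately show ?thesis by auto
  next
    case False
    then have gL: "g \<in> lsp L" using Cons by auto
    have gc: "g \<in> carrier M" using Cons.prems by auto
    have "g = g \<oplus>\<^bsub>M\<^esub> sm \<zero> a" using Cons.prems gc by (simp add: sm_zero_l)
    then show ?thesis using gL by (auto intro!: exI[of _ g] exI[of _ \<zero>])
  qed
qed

lemma comb_add:
  assumes "s1 \<in> carrier M" "s2 \<in> carrier M" "g \<in> carrier M" "r1 \<in> carrier R" "r2 \<in> carrier R"
  shows "(s1 \<oplus>\<^bsub>M\<^esub> sm r1 g) \<oplus>\<^bsub>M\<^esub> (s2 \<oplus>\<^bsub>M\<^esub> sm r2 g) = (s1 \<oplus>\<^bsub>M\<^esub> s2) \<oplus>\<^bsub>M\<^esub> sm (r1 \<oplus> r2) g"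
proof -
  have sc: "sm r1 g \<in> carrier M" "sm r2 g \<in> carrier M" using assms sm_closed by auto
  have "(s1 \<oplus>\<^bsub>M\<^esub> sm r1 g) \<oplus>\<^bsub>M\<^esub> (s2 \<oplus>\<^bsub>M\<^esub> sm r2 g) = (s1 \<oplus>\<^bsub>M\<^esub> s2) \<oplus>\<^bsub>M\<^esub> (sm r1 g \<oplus>\<^bsub>M\<^esub> sm r2 g)"
    using assms sc by (simp add: M.a_ac)
  also have "\<dots> = (s1 \<oplus>\<^bsub>M\<^esub> s2) \<oplus>\<^bsub>M\<^esub> sm (r1 \<oplus> r2) g"
    using assms by (simp add: sm_ldistr)
  finally show ?thesis .
qed

lemma comb_sm:
  assumes "s \<in> carrier M" "g \<in> carrier M" "r \<in> carrier R" "a \<in> carrier R"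
  shows "sm a (s \<oplus>\<^bsub>M\<^esub> sm r g) = sm a s \<oplus>\<^bsub>M\<^esub> sm (a \<otimes> r) g"
  using assms by (simp add: sm_rdistr sm_closed sm_assoc)

lemma sm_inj:
  assumes m: "m \<in> carrier M" and nt: "\<forall>r\<in>carrier R. sm r m = \<zero>\<^bsub>M\<^esub> \<longrightarrow> r = \<zero>"
    and r: "r \<in> carrier R" "r' \<in> carrier R" and eq: "sm r m = sm r' m"
  shows "r = r'"
proof -
  have "sm (r \<ominus> r') m = sm r m \<oplus>\<^bsub>M\<^esub> \<ominus>\<^bsub>M\<^esub> sm r' m"
    using r m by (simp add: R.minus_eq sm_ldistr sm_neg_l)
  also have "\<dots> = \<zero>\<^bsub>M\<^esub>" using eq r m sm_closed by (simp add: M.r_neg)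
  finally have "r \<ominus> r' = \<zero>" using nt r by auto
  then show ?thesis using r by (simp add: R.r_right_minus_eq)
qed

lemma lsp_neg: "set L \<subseteq> carrier M \<Longrightarrow> x \<in> lsp L \<Longrightarrow> \<ominus>\<^bsub>M\<^esub> x \<in> lsp L"
proof -
  assume L: "set L \<subseteq> carrier M" and x: "x \<in> lsp L"
  then have xc: "x \<in> carrier M" using lsp_carrier by auto
  have "\<ominus>\<^bsub>M\<^esub> x = sm (\<ominus> \<one>) x" using xc by (simp add: sm_neg_l sm_one)
  then show ?thesis using lsp_sm[OF L x, of "\<ominus> \<one>"] by simp
qed

definition good :: "'b set \<Rightarrow> 'b \<Rightarrow> ('b \<Rightarrow> 'a) \<Rightarrow> bool" where
  "good S m f \<longleftrightarrow> (\<forall>x\<in>S. f x \<in> carrier R) \<and> (\<forall>x\<in>S. \<forall>y\<in>S. f (x \<oplus>\<^bsub>M\<^esub> y) = f x \<oplus> f y)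
     \<and> (\<forall>r\<in>carrier R. \<forall>x\<in>S. f (sm r x) = r \<otimes> f x) \<and> f m \<noteq> \<zero>"

lemma base_case:
  assumes m: "m \<in> carrier M" and nt: "\<forall>r\<in>carrier R. sm r m = \<zero>\<^bsub>M\<^esub> \<longrightarrow> r = \<zero>"
  shows "\<exists>f. good (lsp [m]) m f"
proof -
  define f where "f x = (THE r. r \<in> carrier R \<and> x = sm r m)" for x
  have fv: "f (sm r m) = r" if "r \<in> carrier R" for r
    unfolding f_def
    by (rule the_equality) (use that sm_inj[OF m nt] in auto)
  have S: "lsp [m] \<subseteq> {sm r m | r. r \<in> carrier R}"
    using m by (auto simp: sm_closed)
  have "good (lsp [m]) m f"
    unfolding good_def
  proof (intro conjI ballI)
    fix x assume "x \<in> lsp [m]"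
    then have "x \<in> {sm r m |r. r \<in> carrier R}" using S by blast
    then show "f x \<in> carrier R" using fv by auto
  next
    fix x y assume "x \<in> lsp [m]" "y \<in> lsp [m]"
    then have "x \<in> {sm r m |r. r \<in> carrier R}" "y \<in> {sm r m |r. r \<in> carrier R}" using S by blast+
    then obtain a b where "x = sm a m" "y = sm b m" "a \<in> carrier R" "b \<in> carrier R" by auto
    then show "f (x \<oplus>\<^bsub>M\<^esub> y) = f x \<oplus> f y" using m
      by (simp add: sm_ldistr[symmetric] fv)
  next
    fix r x assume "r \<in> carrier R" "x \<in> lsp [m]"
    then have "x \<in> {sm r m |r. r \<in> carrier R}" using S by blast
    then obtain a where "x = sm a m" "a \<in> carrier R" by auto
    then show "f (sm r x) = r \<otimes> f x" using m `r \<in> carrier R`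
      by (simp add: sm_assoc[symmetric] fv)
  next
    have "f m = \<one>" using fv[of \<one>] m by (simp add: sm_one)
    then show "f m \<noteq> \<zero>" by simp
  qed
  then show ?thesis by blast
qed

lemma step_case:
  assumes m: "m \<in> carrier M" and L: "set L \<subseteq> carrier M" and g: "g \<in> carrier M"
    and IH: "good (lsp L) m f" and mS: "m \<in> lsp L"
  shows "\<exists>f'. good (lsp (g # L)) m f'"
proof -
  let ?S = "lsp L"
  have Sc: "?S \<subseteq> carrier M" using lsp_carrier L by auto
  have L': "set (g # L) \<subseteq> carrier M" using L g by auto
  show ?thesis
  proof (cases "\<exists>d\<in>carrier R. d \<noteq> \<zero> \<and> sm d g \<in> ?S")
    case True
    then obtain d where d: "d \<in> carrier R" "d \<noteq> \<zero>" "sm d g \<in> ?S" by auto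
    have inS: "sm d y \<in> ?S" if yy: "y \<in> lsp (g # L)" for y
    proof -
      obtain s r where sr: "y = s \<oplus>\<^bsub>M\<^esub> sm r g" "s \<in> ?S" "r \<in> carrier R" using yy by auto
      have "sm d y = sm d s \<oplus>\<^bsub>M\<^esub> sm r (sm d g)"
        using sr d g Sc by (simp add: sm_rdistr sm_closed sm_comm subsetD)
      then show ?thesis using sr d lsp_add[OF L] lsp_sm[OF L] by simp
    qed
    define f' where "f' y = f (sm d y)" for y
    have "good (lsp (g # L)) m f'"
      unfolding good_def
    proof (intro conjI ballI)
      fix x assume "x \<in> lsp (g # L)"
      then show "f' x \<in> carrier R" using inS IH unfolding good_def f'_def by blast
    next
      fix x y assume xy: "x \<in> lsp (g # L)" "y \<in> lsp (g # L)"
      then have "x \<in> carrier M" "y \<in> carrier M" using lsp_carrier[OF L'] by auto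
      then have "sm d (x \<oplus>\<^bsub>M\<^esub> y) = sm d x \<oplus>\<^bsub>M\<^esub> sm d y" using d by (simp add: sm_rdistr)
      then show "f' (x \<oplus>\<^bsub>M\<^esub> y) = f' x \<oplus> f' y"
        unfolding f'_def using IH inS xy unfolding good_def by simp
    next
      fix r x assume rx: "r \<in> carrier R" "x \<in> lsp (g # L)"
      then have "x \<in> carrier M" using lsp_carrier[OF L'] by auto
      then have "sm d (sm r x) = sm r (sm d x)" using d rx by (simp add: sm_comm)
      then show "f' (sm r x) = r \<otimes> f' x"
        unfolding f'_def using IH inS rx unfolding good_def by simp
    next
      have "f' m = d \<otimes> f m" unfolding f'_def using IH mS d unfolding good_def by simp
      moreover have "f m \<in> carrier R" "f m \<noteq> \<zero>" using IH mS unfolding good_def by auto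
      ultimately show "f' m \<noteq> \<zero>" using d R.integral by auto
    qed
    then show ?thesis by blast
  next
    case False
    then have indep: "d = \<zero>" if "d \<in> carrier R" "sm d g \<in> ?S" for d
      using that by blast
    have uniq: "s = s'" if "s \<in> ?S" "s' \<in> ?S" "r \<in> carrier R" "r' \<in> carrier R"
        "s \<oplus>\<^bsub>M\<^esub> sm r g = s' \<oplus>\<^bsub>M\<^esub> sm r' g" for s s' r r'
    proof -
      have c: "s \<in> carrier M" "s' \<in> carrier M" "sm r g \<in> carrier M" "sm r' g \<in> carrier M"
        using that Sc g sm_closed by auto
      define e where "e = r \<ominus> r'"
      have ec: "e \<in> carrier R" using that e_def by simp
      have e1: "sm e g = sm r g \<oplus>\<^bsub>M\<^esub> \<ominus>\<^bsub>M\<^esub> sm r' g"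
        using that g by (simp add: e_def R.minus_eq sm_ldistr sm_neg_l)
      have "s' = (s' \<oplus>\<^bsub>M\<^esub> sm r' g) \<oplus>\<^bsub>M\<^esub> \<ominus>\<^bsub>M\<^esub> sm r' g"
        using c by (simp add: M.a_assoc M.r_neg)
      also have "\<dots> = s \<oplus>\<^bsub>M\<^esub> sm e g" using that(5) c e1 by (simp add: M.a_assoc[symmetric])
      finally have s': "s' = s \<oplus>\<^bsub>M\<^esub> sm e g" .
      have "sm e g = \<ominus>\<^bsub>M\<^esub> s \<oplus>\<^bsub>M\<^esub> s'"
        using s' c ec g sm_closed by (simp add: M.a_assoc[symmetric] M.l_neg)
      moreover have "\<ominus>\<^bsub>M\<^esub> s \<oplus>\<^bsub>M\<^esub> s' \<in> ?S"
        using lsp_add[OF L] lsp_neg[OF L] that by simp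
      ultimately have "e = \<zero>" using indep ec by simp
      then show ?thesis using s' c g by (simp add: sm_zero_l)
    qed
    define f' where "f' y = f (SOME s. s \<in> ?S \<and> (\<exists>r\<in>carrier R. y = s \<oplus>\<^bsub>M\<^esub> sm r g))" for y
    have fv: "f' (s \<oplus>\<^bsub>M\<^esub> sm r g) = f s" if "s \<in> ?S" "r \<in> carrier R" for s r
    proof -
      let ?P = "\<lambda>s'. s' \<in> ?S \<and> (\<exists>r\<in>carrier R. s \<oplus>\<^bsub>M\<^esub> sm r g = s' \<oplus>\<^bsub>M\<^esub> sm r g)"
      have ex: "\<exists>s'. s' \<in> ?S \<and> (\<exists>r'\<in>carrier R. s \<oplus>\<^bsub>M\<^esub> sm r g = s' \<oplus>\<^bsub>M\<^esub> sm r' g)"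
        using that by blast
      define s0 where "s0 = (SOME s'. s' \<in> ?S \<and> (\<exists>r'\<in>carrier R. s \<oplus>\<^bsub>M\<^esub> sm r g = s' \<oplus>\<^bsub>M\<^esub> sm r' g))"
      have "s0 \<in> ?S \<and> (\<exists>r'\<in>carrier R. s \<oplus>\<^bsub>M\<^esub> sm r g = s0 \<oplus>\<^bsub>M\<^esub> sm r' g)"
        unfolding s0_def by (rule someI_ex[OF ex])
      then obtain r' where "s0 \<in> ?S" "r' \<in> carrier R" "s \<oplus>\<^bsub>M\<^esub> sm r g = s0 \<oplus>\<^bsub>M\<^esub> sm r' g" by blast
      then have "s0 = s" using uniq[of s s0 r r'] that by simp
      then have "(SOME s'. s' \<in> ?S \<and> (\<exists>r'\<in>carrier R. s \<oplus>\<^bsub>M\<^esub> sm r g = s' \<oplus>\<^bsub>M\<^esub> sm r' g)) = s"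
        unfolding s0_def .
      then show ?thesis unfolding f'_def by simp
    qed
    have "good (lsp (g # L)) m f'"
      unfolding good_def
    proof (intro conjI ballI)
      fix x assume "x \<in> lsp (g # L)"
      then obtain s r where "x = s \<oplus>\<^bsub>M\<^esub> sm r g" "s \<in> ?S" "r \<in> carrier R" by auto
      then show "f' x \<in> carrier R" using fv IH unfolding good_def by simp
    next
      fix x y assume "x \<in> lsp (g # L)" "y \<in> lsp (g # L)"
      then obtain s1 r1 s2 r2 where 1: "x = s1 \<oplus>\<^bsub>M\<^esub> sm r1 g" "s1 \<in> ?S" "r1 \<in> carrier R"
        and 2: "y = s2 \<oplus>\<^bsub>M\<^esub> sm r2 g" "s2 \<in> ?S" "r2 \<in> carrier R" by auto
      have "x \<oplus>\<^bsub>M\<^esub> y = (s1 \<oplus>\<^bsub>M\<^esub> s2) \<oplus>\<^bsub>M\<^esub> sm (r1 \<oplus> r2) g"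
        using 1 2 comb_add[of s1 s2 g r1 r2] g Sc by (simp add: subsetD)
      moreover have "s1 \<oplus>\<^bsub>M\<^esub> s2 \<in> ?S" using lsp_add[OF L] 1 2 by simp
      ultimately show "f' (x \<oplus>\<^bsub>M\<^esub> y) = f' x \<oplus> f' y"
        using fv 1 2 IH unfolding good_def by simp
    next
      fix a x assume a: "a \<in> carrier R" and "x \<in> lsp (g # L)"
      then obtain s r where 1: "x = s \<oplus>\<^bsub>M\<^esub> sm r g" "s \<in> ?S" "r \<in> carrier R" by auto
      have "sm a x = sm a s \<oplus>\<^bsub>M\<^esub> sm (a \<otimes> r) g"
        using 1 comb_sm g Sc a by auto
      moreover have "sm a s \<in> ?S" using lsp_sm[OF L] 1 a by simp
      ultimately show "f' (sm a x) = a \<otimes> f' x"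
        using fv 1 IH a unfolding good_def by simp
    next
      have "m = m \<oplus>\<^bsub>M\<^esub> sm \<zero> g" using m g by (simp add: sm_zero_l)
      then have "f' m = f m" using fv[OF mS, of \<zero>] by simp
      then show "f' m \<noteq> \<zero>" using IH unfolding good_def by simp
    qed
    then show ?thesis by blast
  qed
qed

lemma good_exists:
  assumes m: "m \<in> carrier M" and nt: "\<forall>r\<in>carrier R. sm r m = \<zero>\<^bsub>M\<^esub> \<longrightarrow> r = \<zero>"
  shows "set L \<subseteq> carrier M \<Longrightarrow> \<exists>f. good (lsp (L @ [m])) m f"
proof (induction L)
  case Nil then show ?case using base_case[OF m nt] by simp
next
  case (Cons g L)
  then obtain f where f: "good (lsp (L @ [m])) m f" by auto
  have L: "set (L @ [m]) \<subseteq> carrier M" using Cons.prems m by auto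
  have "m \<in> lsp (L @ [m])" using lsp_gen[OF L] by simp
  then show ?case using step_case[OF m L _ f] Cons.prems by simp
qed

lemma functional_exists:
  assumes m: "m \<in> carrier M" and nt: "\<forall>r\<in>carrier R. sm r m = \<zero>\<^bsub>M\<^esub> \<longrightarrow> r = \<zero>"
    and L: "set L \<subseteq> carrier M" and gen: "carrier M \<subseteq> lsp L"
  shows "\<exists>f. (\<forall>x\<in>carrier M. f x \<in> carrier R) \<and> (\<forall>x\<in>carrier M. \<forall>y\<in>carrier M. f (x \<oplus>\<^bsub>M\<^esub> y) = f x \<oplus> f y)
     \<and> (\<forall>r\<in>carrier R. \<forall>x\<in>carrier M. f (sm r x) = r \<otimes> f x) \<and> f m \<noteq> \<zero>"
proof -
  obtain f where f: "good (lsp (L @ [m])) m f" using good_exists[OF m nt L] by auto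
  have "lsp (L @ [m]) = carrier M"
    using lsp_mono[OF L m] gen lsp_carrier[of "L @ [m]"] L m by auto
  then show ?thesis using f unfolding good_def by auto
qed

end

lemma (in abelian_monoid) finsum_closed_in:
  assumes "finite S" "\<zero> \<in> Z" "\<And>x y. x \<in> Z \<Longrightarrow> y \<in> Z \<Longrightarrow> x \<oplus> y \<in> Z" "Z \<subseteq> carrier G"
  shows "f \<in> S \<rightarrow> Z \<Longrightarrow> finsum G f S \<in> Z"
  using assms(1)
proof (induction S rule: finite_induct)
  case empty then show ?case using assms by simp
next
  case (insert x F)
  then have "f \<in> F \<rightarrow> carrier G" "f x \<in> carrier G" using assms(4) by auto
  then have "finsum G f (insert x F) = f x \<oplus> finsum G f F"
    using insert by (simp add: finsum_insert)
  then show ?case using insert assms by auto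
qed

lemma UP_carrier: "carrier (UP R) = up R"
  unfolding UP_def by simp

lemma UP_coeff: "p \<in> up R \<Longrightarrow> coeff (UP R) p k = p k"
  unfolding UP_def by simp

locale trunc = R: domain R for R :: "('a, 'r) ring_scheme" (structure) +
  fixes n :: nat
  assumes n_pos: "n \<ge> 1"

sublocale trunc \<subseteq> U: UP_domain R "UP R"
  by unfold_locales

context trunc
begin

abbreviation PP where "PP \<equiv> UP R"
definition Xn where "Xn = monom PP \<one> n"
definition II where "II = PIdl\<^bsub>PP\<^esub> Xn"
abbreviation AA where "AA \<equiv> trunc_poly_ring R n"
abbreviation pi where "pi \<equiv> a_r_coset PP II"
definition cc where "cc r = pi (monom PP r 0)"
definition tt where "tt = pi (monom PP \<one> 1)"

lemma AA_def: "AA = PP Quot II"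
  unfolding trunc_poly_ring_def II_def Xn_def by simp

lemma Xn_closed: "Xn \<in> carrier PP" unfolding Xn_def by simp

lemma II_ideal: "ideal II PP"
  unfolding II_def using Xn_closed by (rule U.cgenideal_ideal)

lemma AA_cring: "cring AA"
  unfolding AA_def by (rule ideal.quotient_is_cring[OF II_ideal U.UP_cring])

lemma pi_hom: "ring_hom_cring PP AA pi"
  unfolding AA_def by (rule ideal.rcos_ring_hom_cring[OF II_ideal U.UP_cring])

end

sublocale trunc \<subseteq> A: cring AA by (rule AA_cring)
sublocale trunc \<subseteq> H: ring_hom_cring PP AA pi by (rule pi_hom)

context trunc
begin

lemma carrier_AA: "carrier AA = pi ` carrier PP"
  unfolding AA_def FactRing_def using A_RCOSETS_def'[of PP II] by auto

lemma zero_AA: "\<zero>\<^bsub>AA\<^esub> = II"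
  unfolding AA_def FactRing_def by simp

lemma pi_zero_iff: "p \<in> carrier PP \<Longrightarrow> pi p = \<zero>\<^bsub>AA\<^esub> \<longleftrightarrow> p \<in> II"
proof -
  assume p: "p \<in> carrier PP"
  interpret I: ideal II PP by (rule II_ideal)
  show ?thesis
  proof
    assume "pi p = \<zero>\<^bsub>AA\<^esub>"
    then show "p \<in> II" using I.a_rcos_self[OF p] zero_AA by simp
  next
    assume "p \<in> II" then show "pi p = \<zero>\<^bsub>AA\<^esub>" using I.a_rcos_const zero_AA by simp
  qed
qed

lemma coeff_below:
  assumes q: "q \<in> carrier PP" and k: "k < n"
  shows "coeff PP (Xn \<otimes>\<^bsub>PP\<^esub> q) k = \<zero>"
proof -
  have "coeff PP (Xn \<otimes>\<^bsub>PP\<^esub> q) k = (\<Oplus>i\<in>{..k}. coeff PP Xn i \<otimes> coeff PP q (k - i))"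
    using q Xn_closed by simp
  also have "\<dots> = (\<Oplus>i\<in>{..k}. \<zero>)"
    by (rule R.finsum_cong) (use k q in \<open>auto simp: Xn_def\<close>)
  also have "\<dots> = \<zero>" by simp
  finally show ?thesis .
qed

lemma II_coeff: "p \<in> II \<Longrightarrow> k < n \<Longrightarrow> coeff PP p k = \<zero>"
proof -
  assume p: "p \<in> II" and k: "k < n"
  then obtain q where q: "q \<in> carrier PP" "p = q \<otimes>\<^bsub>PP\<^esub> Xn" unfolding II_def cgenideal_def by auto
  then have "p = Xn \<otimes>\<^bsub>PP\<^esub> q" using Xn_closed U.m_comm by simp
  then show ?thesis using coeff_below q k by simp
qed

lemma coeff_II:
  assumes p: "p \<in> carrier PP" and z: "\<And>k. k < n \<Longrightarrow> coeff PP p k = \<zero>"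
  shows "p \<in> II"
proof -
  define q where "q = (\<lambda>k. p (k + n))"
  have pup: "p \<in> up R" using p by (simp add: UP_carrier)
  then obtain N where N: "bound \<zero> N p" unfolding up_def by auto
  have "q \<in> up R"
  proof (rule mem_upI)
    fix k show "q k \<in> carrier R" using pup unfolding q_def up_def by auto
  next
    have "bound \<zero> N q" using N unfolding q_def bound_def by auto
    then show "\<exists>N. bound \<zero> N q" by blast
  qed
  then have qc: "q \<in> carrier PP" by (simp add: UP_carrier)
  have cq: "coeff PP q k = p (k + n)" for k using UP_coeff[OF \<open>q \<in> up R\<close>] unfolding q_def by simp
  have cp: "coeff PP p k = p k" for k using UP_coeff[OF pup] .
  have "Xn \<otimes>\<^bsub>PP\<^esub> q = p"
  proof (rule U.up_eqI)
    fix k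
    show "coeff PP (Xn \<otimes>\<^bsub>PP\<^esub> q) k = coeff PP p k"
    proof (cases "k < n")
      case True then show ?thesis using coeff_below[OF qc] z by simp
    next
      case False
      then have "k = (k - n) + n" by simp
      then have "coeff PP (Xn \<otimes>\<^bsub>PP\<^esub> q) k = \<one> \<otimes> coeff PP q (k - n)"
        using U.coeff_monom_mult[OF R.one_closed qc, of n "k - n"] unfolding Xn_def by simp
      also have "\<dots> = coeff PP p k" using False cq cp U.coeff_closed[OF p, of k] by simp
      finally show ?thesis .
    qed
  qed (use qc Xn_closed p in auto)
  then have "p = q \<otimes>\<^bsub>PP\<^esub> Xn" using qc Xn_closed U.m_comm by simp
  then show ?thesis unfolding II_def cgenideal_def using qc by auto
qed

end

context trunc
begin

lemma cc_closed [simp]: "r \<in> carrier R \<Longrightarrow> cc r \<in> carrier AA"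
  unfolding cc_def by simp

lemma tt_closed [simp]: "tt \<in> carrier AA"
  unfolding tt_def by simp

lemma cc_add: "r \<in> carrier R \<Longrightarrow> s \<in> carrier R \<Longrightarrow> cc (r \<oplus> s) = cc r \<oplus>\<^bsub>AA\<^esub> cc s"
  unfolding cc_def by simp

lemma cc_mult: "r \<in> carrier R \<Longrightarrow> s \<in> carrier R \<Longrightarrow> cc (r \<otimes> s) = cc r \<otimes>\<^bsub>AA\<^esub> cc s"
  unfolding cc_def using U.monom_mult[of r s 0 0] by simp

lemma cc_one: "cc \<one> = \<one>\<^bsub>AA\<^esub>"
  unfolding cc_def by simp

lemma cc_zero: "cc \<zero> = \<zero>\<^bsub>AA\<^esub>"
  unfolding cc_def by simp

lemma pi_monom: "r \<in> carrier R \<Longrightarrow> pi (monom PP r i) = cc r \<otimes>\<^bsub>AA\<^esub> tt [^]\<^bsub>AA\<^esub> i"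
proof -
  assume r: "r \<in> carrier R"
  have "monom PP r i = monom PP r 0 \<otimes>\<^bsub>PP\<^esub> monom PP \<one> i"
    using U.monom_mult[of r \<one> 0 i] r by simp
  moreover have "monom PP \<one> i = monom PP \<one> 1 [^]\<^bsub>PP\<^esub> i"
    using U.monom_pow[of \<one> 1 i] by simp
  ultimately have "pi (monom PP r i) = pi (monom PP r 0) \<otimes>\<^bsub>AA\<^esub> pi (monom PP \<one> 1) [^]\<^bsub>AA\<^esub> i"
    using r by (simp add: H.ring.hom_nat_pow)
  then show ?thesis unfolding cc_def tt_def .
qed

lemma tt_pow_n: "i \<ge> n \<Longrightarrow> tt [^]\<^bsub>AA\<^esub> i = \<zero>\<^bsub>AA\<^esub>"
proof -
  assume i: "i \<ge> n"
  have "monom PP \<one> i = (monom PP \<one> (i - n)) \<otimes>\<^bsub>PP\<^esub> Xn"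
    using U.monom_mult[of \<one> \<one> "i - n" n] i unfolding Xn_def by simp
  then have "monom PP \<one> i \<in> II" unfolding II_def cgenideal_def by auto
  then have "pi (monom PP \<one> i) = \<zero>\<^bsub>AA\<^esub>" using pi_zero_iff by simp
  then show ?thesis using pi_monom[of \<one> i] by (simp add: cc_one)
qed

lemma A_induct:
  assumes z: "\<zero>\<^bsub>AA\<^esub> \<in> Z" and add: "\<And>x y. x \<in> Z \<Longrightarrow> y \<in> Z \<Longrightarrow> x \<oplus>\<^bsub>AA\<^esub> y \<in> Z"
    and sub: "Z \<subseteq> carrier AA"
    and mon: "\<And>r (i::nat). r \<in> carrier R \<Longrightarrow> cc r \<otimes>\<^bsub>AA\<^esub> tt [^]\<^bsub>AA\<^esub> i \<in> Z"
    and a: "a \<in> carrier AA"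
  shows "a \<in> Z"
proof -
  obtain p where p: "p \<in> carrier PP" "a = pi p" using a carrier_AA by auto
  have hm: "pi (monom PP (coeff PP p i) i) \<in> Z" for i
    using mon[OF U.coeff_closed[OF p(1)]] pi_monom[OF U.coeff_closed[OF p(1)]] by simp
  have e: "(\<Oplus>\<^bsub>PP\<^esub> i \<in> {..deg R p}. monom PP (coeff PP p i) i) = p"
    using U.up_repr[OF p(1)] .
  have "pi (\<Oplus>\<^bsub>PP\<^esub> i \<in> {..deg R p}. monom PP (coeff PP p i) i) = (\<Oplus>\<^bsub>AA\<^esub> i \<in> {..deg R p}. pi (monom PP (coeff PP p i) i))"
    using p by (simp add: H.hom_finsum Pi_def comp_def)
  then have "a = (\<Oplus>\<^bsub>AA\<^esub> i \<in> {..deg R p}. pi (monom PP (coeff PP p i) i))"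
    using e p(2) by simp
  also have "\<dots> \<in> Z"
    by (rule A.finsum_closed_in) (use z add sub hm in auto)
  finally show ?thesis .
qed

lemma cc_nzd:
  assumes r: "r \<in> carrier R" "r \<noteq> \<zero>"
  shows "cc r \<in> non_zero_divisors AA"
  unfolding non_zero_divisors_def
proof (intro CollectI conjI ballI impI)
  show "cc r \<in> carrier AA" using r by simp
  fix v assume v: "v \<in> carrier AA" and e: "cc r \<otimes>\<^bsub>AA\<^esub> v = \<zero>\<^bsub>AA\<^esub>"
  obtain p where p: "p \<in> carrier PP" "v = pi p" using v carrier_AA by auto
  have "cc r \<otimes>\<^bsub>AA\<^esub> v = pi (monom PP r 0 \<otimes>\<^bsub>PP\<^esub> p)"
    using p r unfolding cc_def by simp
  then have "pi (monom PP r 0 \<otimes>\<^bsub>PP\<^esub> p) = \<zero>\<^bsub>AA\<^esub>" using e by simp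
  moreover have "monom PP r 0 \<otimes>\<^bsub>PP\<^esub> p \<in> carrier PP" using p r by simp
  ultimately have "monom PP r 0 \<otimes>\<^bsub>PP\<^esub> p \<in> II" using pi_zero_iff by blast
  then have "coeff PP (monom PP r 0 \<otimes>\<^bsub>PP\<^esub> p) k = \<zero>" if "k < n" for k
    using II_coeff that by simp
  then have "r \<otimes> coeff PP p k = \<zero>" if "k < n" for k
    using that p r by (simp add: U.monom_mult_is_smult)
  then have "coeff PP p k = \<zero>" if "k < n" for k
    using that p r R.integral by (meson U.coeff_closed)
  then have "p \<in> II" using coeff_II p by blast
  then show "v = \<zero>\<^bsub>AA\<^esub>" using p pi_zero_iff by simp
qed

lemma nonvanish:
  assumes n: "n = Suc k" and b: "b \<in> {..k} \<rightarrow> carrier R" and b0: "b 0 \<noteq> \<zero>"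
  shows "(\<Oplus>\<^bsub>AA\<^esub> i \<in> {..k}. cc (b i) \<otimes>\<^bsub>AA\<^esub> tt [^]\<^bsub>AA\<^esub> (k - i)) \<noteq> \<zero>\<^bsub>AA\<^esub>"
proof
  let ?q = "\<Oplus>\<^bsub>PP\<^esub> i \<in> {..k}. monom PP (b i) (k - i)"
  have ci: "coeff PP (monom PP (b i) (k - i)) k = (if 0 = i then b i else \<zero>)" if i: "i \<in> {..k}" for i
  proof -
    have "(k - i = k) = (i = 0)" using i by auto
    then show ?thesis using b i by (auto simp: Pi_def)
  qed
  have qc: "?q \<in> carrier PP" by (intro U.finsum_closed) (use b in \<open>auto simp: Pi_def\<close>)
  have "pi ?q = (\<Oplus>\<^bsub>AA\<^esub> i \<in> {..k}. pi (monom PP (b i) (k - i)))"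
    using b by (simp add: H.hom_finsum Pi_def comp_def)
  also have "\<dots> = (\<Oplus>\<^bsub>AA\<^esub> i \<in> {..k}. cc (b i) \<otimes>\<^bsub>AA\<^esub> tt [^]\<^bsub>AA\<^esub> (k - i))"
    by (rule A.finsum_cong) (use b pi_monom in \<open>auto simp: Pi_def\<close>)
  finally have eq: "pi ?q = (\<Oplus>\<^bsub>AA\<^esub> i \<in> {..k}. cc (b i) \<otimes>\<^bsub>AA\<^esub> tt [^]\<^bsub>AA\<^esub> (k - i))" .
  assume "(\<Oplus>\<^bsub>AA\<^esub> i \<in> {..k}. cc (b i) \<otimes>\<^bsub>AA\<^esub> tt [^]\<^bsub>AA\<^esub> (k - i)) = \<zero>\<^bsub>AA\<^esub>"
  then have "?q \<in> II" using eq pi_zero_iff qc by simp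
  then have c0: "coeff PP ?q k = \<zero>" using II_coeff n by simp
  have "coeff PP ?q k = (\<Oplus>i \<in> {..k}. coeff PP (monom PP (b i) (k - i)) k)"
    using b by (simp add: U.coeff_finsum Pi_def)
  also have "\<dots> = (\<Oplus>i \<in> {..k}. if 0 = i then b i else \<zero>)"
    by (rule R.finsum_cong) (use b ci in \<open>auto simp: Pi_def\<close>)
  also have "\<dots> = b 0"
    by (rule R.finsum_singleton) (use b in \<open>auto simp: Pi_def\<close>)
  finally show False using c0 b0 by simp
qed

end

locale tmod = trunc +
  fixes M :: "((nat \<Rightarrow> 'a) set, 'mm, 'mx) module_scheme"
  assumes M_mod: "module (trunc_poly_ring R n) M"

sublocale tmod \<subseteq> MM: module "trunc_poly_ring R n" M by (rule M_mod)

context tmod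
begin

definition sm where "sm r x = cc r \<odot>\<^bsub>M\<^esub> x"

lemma rmod_sm: "rmod R M sm"
proof (intro rmod.intro rmod_axioms.intro)
  show "domain R" by (rule R.domain_axioms)
  show "abelian_group M" by (rule MM.abelian_group_axioms)
next
  fix r x assume "r \<in> carrier R" "x \<in> carrier M"
  then show "sm r x \<in> carrier M" unfolding sm_def by simp
next
  fix r s x assume "r \<in> carrier R" "s \<in> carrier R" "x \<in> carrier M"
  then show "sm (r \<oplus> s) x = sm r x \<oplus>\<^bsub>M\<^esub> sm s x"
    unfolding sm_def by (simp add: cc_add MM.smult_l_distr)
next
  fix r x y assume "r \<in> carrier R" "x \<in> carrier M" "y \<in> carrier M"
  then show "sm r (x \<oplus>\<^bsub>M\<^esub> y) = sm r x \<oplus>\<^bsub>M\<^esub> sm r y"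
    unfolding sm_def by (simp add: MM.smult_r_distr)
next
  fix r s x assume "r \<in> carrier R" "s \<in> carrier R" "x \<in> carrier M"
  then show "sm (r \<otimes> s) x = sm r (sm s x)"
    unfolding sm_def by (simp add: cc_mult MM.smult_assoc1)
next
  fix x assume "x \<in> carrier M"
  then show "sm \<one> x = x" unfolding sm_def by (simp add: cc_one)
qed

end

sublocale tmod \<subseteq> RM: rmod R M sm by (rule rmod_sm)

locale tfun = tmod +
  fixes f
  assumes f_closed: "x \<in> carrier M \<Longrightarrow> f x \<in> carrier R"
    and f_add: "x \<in> carrier M \<Longrightarrow> y \<in> carrier M \<Longrightarrow> f (x \<oplus>\<^bsub>M\<^esub> y) = f x \<oplus> f y"
    and f_sm: "r \<in> carrier R \<Longrightarrow> x \<in> carrier M \<Longrightarrow> f (sm r x) = r \<otimes> f x"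

context tfun
begin

definition kk where "kk = n - 1"

lemma n_kk: "n = Suc kk" unfolding kk_def using n_pos by simp

definition G0 where
  "G0 x = (\<Oplus>\<^bsub>AA\<^esub> i \<in> {..kk}. cc (f (tt [^]\<^bsub>AA\<^esub> i \<odot>\<^bsub>M\<^esub> x)) \<otimes>\<^bsub>AA\<^esub> tt [^]\<^bsub>AA\<^esub> (kk - i))"

lemma ttx_closed [simp]: "x \<in> carrier M \<Longrightarrow> tt [^]\<^bsub>AA\<^esub> (i::nat) \<odot>\<^bsub>M\<^esub> x \<in> carrier M"
  by (simp add: MM.smult_closed)

lemma hc_closed [simp]: "x \<in> carrier M \<Longrightarrow> cc (f (tt [^]\<^bsub>AA\<^esub> (i::nat) \<odot>\<^bsub>M\<^esub> x)) \<in> carrier AA"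
  by (simp add: f_closed)

lemma f_zero: "f \<zero>\<^bsub>M\<^esub> = \<zero>"
proof -
  have "f \<zero>\<^bsub>M\<^esub> = f \<zero>\<^bsub>M\<^esub> \<oplus> f \<zero>\<^bsub>M\<^esub>" using f_add[of "\<zero>\<^bsub>M\<^esub>" "\<zero>\<^bsub>M\<^esub>"] by simp
  then show ?thesis using f_closed[of "\<zero>\<^bsub>M\<^esub>"] by (metis R.add.r_cancel_one' MM.zero_closed)
qed

lemma G0_closed: "x \<in> carrier M \<Longrightarrow> G0 x \<in> carrier AA"
  unfolding G0_def by (intro A.finsum_closed) (auto intro!: f_closed)

lemma G0_add:
  assumes x: "x \<in> carrier M" and y: "y \<in> carrier M"
  shows "G0 (x \<oplus>\<^bsub>M\<^esub> y) = G0 x \<oplus>\<^bsub>AA\<^esub> G0 y"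
proof -
  have "G0 (x \<oplus>\<^bsub>M\<^esub> y) = (\<Oplus>\<^bsub>AA\<^esub> i \<in> {..kk}. cc (f (tt [^]\<^bsub>AA\<^esub> i \<odot>\<^bsub>M\<^esub> x)) \<otimes>\<^bsub>AA\<^esub> tt [^]\<^bsub>AA\<^esub> (kk - i)
      \<oplus>\<^bsub>AA\<^esub> cc (f (tt [^]\<^bsub>AA\<^esub> i \<odot>\<^bsub>M\<^esub> y)) \<otimes>\<^bsub>AA\<^esub> tt [^]\<^bsub>AA\<^esub> (kk - i))"
    unfolding G0_def
    by (rule A.finsum_cong) (use x y in \<open>auto simp: MM.smult_r_distr f_add f_closed cc_add A.l_distr\<close>)
  also have "\<dots> = G0 x \<oplus>\<^bsub>AA\<^esub> G0 y"
    unfolding G0_def using x y by (simp add: A.finsum_addf Pi_def f_closed)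
  finally show ?thesis .
qed

lemma G0_cc:
  assumes r: "r \<in> carrier R" and x: "x \<in> carrier M"
  shows "G0 (cc r \<odot>\<^bsub>M\<^esub> x) = cc r \<otimes>\<^bsub>AA\<^esub> G0 x"
proof -
  have e: "tt [^]\<^bsub>AA\<^esub> i \<odot>\<^bsub>M\<^esub> (cc r \<odot>\<^bsub>M\<^esub> x) = sm r (tt [^]\<^bsub>AA\<^esub> i \<odot>\<^bsub>M\<^esub> x)" for i :: nat
    unfolding sm_def using r x
    by (simp add: MM.smult_assoc1[symmetric] A.m_comm)
  have "G0 (cc r \<odot>\<^bsub>M\<^esub> x) = (\<Oplus>\<^bsub>AA\<^esub> i \<in> {..kk}. cc r \<otimes>\<^bsub>AA\<^esub> (cc (f (tt [^]\<^bsub>AA\<^esub> i \<odot>\<^bsub>M\<^esub> x)) \<otimes>\<^bsub>AA\<^esub> tt [^]\<^bsub>AA\<^esub> (kk - i)))"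
    unfolding G0_def
    by (rule A.finsum_cong) (use r x in \<open>auto simp: e f_sm f_closed cc_mult A.m_assoc\<close>)
  also have "\<dots> = cc r \<otimes>\<^bsub>AA\<^esub> G0 x"
    unfolding G0_def using r x by (simp add: A.finsum_rdistr Pi_def f_closed)
  finally show ?thesis .
qed

lemma G0_zero: "G0 \<zero>\<^bsub>M\<^esub> = \<zero>\<^bsub>AA\<^esub>"
proof -
  have "G0 \<zero>\<^bsub>M\<^esub> = G0 \<zero>\<^bsub>M\<^esub> \<oplus>\<^bsub>AA\<^esub> G0 \<zero>\<^bsub>M\<^esub>" using G0_add[of "\<zero>\<^bsub>M\<^esub>" "\<zero>\<^bsub>M\<^esub>"] by simp
  then show ?thesis using G0_closed[of "\<zero>\<^bsub>M\<^esub>"] by (metis A.add.r_cancel_one' MM.zero_closed)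
qed

lemma h_high: "x \<in> carrier M \<Longrightarrow> j \<ge> n \<Longrightarrow> cc (f (tt [^]\<^bsub>AA\<^esub> j \<odot>\<^bsub>M\<^esub> x)) = \<zero>\<^bsub>AA\<^esub>"
  using tt_pow_n by (simp add: f_zero cc_zero)

lemma G0_tt:
  assumes x: "x \<in> carrier M"
  shows "G0 (tt \<odot>\<^bsub>M\<^esub> x) = tt \<otimes>\<^bsub>AA\<^esub> G0 x"
proof -
  define h where "h (j::nat) = cc (f (tt [^]\<^bsub>AA\<^esub> j \<odot>\<^bsub>M\<^esub> x))" for j
  have hc: "h j \<in> carrier AA" for j unfolding h_def using x by (simp add: f_closed)
  have hz: "h j = \<zero>\<^bsub>AA\<^esub>" if "j \<ge> n" for j unfolding h_def using h_high x that by simp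
  have e: "tt [^]\<^bsub>AA\<^esub> i \<odot>\<^bsub>M\<^esub> (tt \<odot>\<^bsub>M\<^esub> x) = tt [^]\<^bsub>AA\<^esub> (Suc i) \<odot>\<^bsub>M\<^esub> x" for i :: nat
    using x by (simp add: MM.smult_assoc1[symmetric])
  have L: "G0 (tt \<odot>\<^bsub>M\<^esub> x) = (\<Oplus>\<^bsub>AA\<^esub> i \<in> {..kk}. h (Suc i) \<otimes>\<^bsub>AA\<^esub> tt [^]\<^bsub>AA\<^esub> (kk - i))"
    unfolding G0_def h_def e ..
  have R: "tt \<otimes>\<^bsub>AA\<^esub> G0 x = (\<Oplus>\<^bsub>AA\<^esub> i \<in> {..kk}. h i \<otimes>\<^bsub>AA\<^esub> tt [^]\<^bsub>AA\<^esub> (Suc (kk - i)))"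
  proof -
    have "tt \<otimes>\<^bsub>AA\<^esub> G0 x = (\<Oplus>\<^bsub>AA\<^esub> i \<in> {..kk}. tt \<otimes>\<^bsub>AA\<^esub> (h i \<otimes>\<^bsub>AA\<^esub> tt [^]\<^bsub>AA\<^esub> (kk - i)))"
      unfolding G0_def h_def[symmetric] using hc by (simp add: A.finsum_rdistr Pi_def)
    also have "\<dots> = (\<Oplus>\<^bsub>AA\<^esub> i \<in> {..kk}. h i \<otimes>\<^bsub>AA\<^esub> tt [^]\<^bsub>AA\<^esub> (Suc (kk - i)))"
      by (rule A.finsum_cong) (use hc in \<open>auto simp: A.m_ac\<close>)
    finally show ?thesis .
  qed
  show ?thesis
  proof (cases kk)
    case 0
    then have n1: "n = 1" using n_kk by simp
    have "tt [^]\<^bsub>AA\<^esub> (1::nat) = \<zero>\<^bsub>AA\<^esub>" using tt_pow_n[of 1] n1 by blast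
    then have t0: "tt = \<zero>\<^bsub>AA\<^esub>" using A.nat_pow_eone[OF tt_closed] by simp
    have "G0 (tt \<odot>\<^bsub>M\<^esub> x) = \<zero>\<^bsub>AA\<^esub>" using t0 x G0_zero by simp
    also have "\<dots> = tt \<otimes>\<^bsub>AA\<^esub> G0 x" using t0 x G0_closed by simp
    finally show ?thesis .
  next
    case (Suc j)
    have hzz: "h (Suc (Suc j)) = \<zero>\<^bsub>AA\<^esub>" using hz n_kk Suc by (metis le_refl)
    have tzz: "tt [^]\<^bsub>AA\<^esub> (Suc (Suc j - 0)) = \<zero>\<^bsub>AA\<^esub>" using tt_pow_n n_kk Suc by (metis le_refl minus_nat.diff_0)
    have "G0 (tt \<odot>\<^bsub>M\<^esub> x) = h (Suc (Suc j)) \<otimes>\<^bsub>AA\<^esub> tt [^]\<^bsub>AA\<^esub> (Suc j - Suc j)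
        \<oplus>\<^bsub>AA\<^esub> (\<Oplus>\<^bsub>AA\<^esub> i \<in> {..j}. h (Suc i) \<otimes>\<^bsub>AA\<^esub> tt [^]\<^bsub>AA\<^esub> (Suc j - i))"
      unfolding L Suc using hc A.finsum_Suc[of "\<lambda>i. h (Suc i) \<otimes>\<^bsub>AA\<^esub> tt [^]\<^bsub>AA\<^esub> (Suc j - i)" j]
      by (simp add: Pi_def)
    also have "\<dots> = (\<Oplus>\<^bsub>AA\<^esub> i \<in> {..j}. h (Suc i) \<otimes>\<^bsub>AA\<^esub> tt [^]\<^bsub>AA\<^esub> (Suc j - i))"
      using hzz hc by (simp add: Pi_def del: A.r_one)
    also have "\<dots> = (\<Oplus>\<^bsub>AA\<^esub> i \<in> {..j}. h (Suc i) \<otimes>\<^bsub>AA\<^esub> tt [^]\<^bsub>AA\<^esub> (Suc (Suc j - Suc i)))"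
      by (rule A.finsum_cong) (use hc in \<open>auto simp: Suc_diff_le\<close>)
    also have "\<dots> = (\<Oplus>\<^bsub>AA\<^esub> i \<in> {..j}. h (Suc i) \<otimes>\<^bsub>AA\<^esub> tt [^]\<^bsub>AA\<^esub> (Suc (Suc j - Suc i)))
        \<oplus>\<^bsub>AA\<^esub> h 0 \<otimes>\<^bsub>AA\<^esub> tt [^]\<^bsub>AA\<^esub> (Suc (Suc j - 0))"
      using tzz hc by (simp add: Pi_def)
    also have "\<dots> = (\<Oplus>\<^bsub>AA\<^esub> i \<in> {..Suc j}. h i \<otimes>\<^bsub>AA\<^esub> tt [^]\<^bsub>AA\<^esub> (Suc (Suc j - i)))"
      using A.finsum_Suc2[of "\<lambda>i. h i \<otimes>\<^bsub>AA\<^esub> tt [^]\<^bsub>AA\<^esub> (Suc (Suc j - i))" j] hc by (simp add: Pi_def)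
    also have "\<dots> = tt \<otimes>\<^bsub>AA\<^esub> G0 x" unfolding R Suc ..
    finally show ?thesis .
  qed
qed

lemma G0_pow: "x \<in> carrier M \<Longrightarrow> G0 (tt [^]\<^bsub>AA\<^esub> (i::nat) \<odot>\<^bsub>M\<^esub> x) = tt [^]\<^bsub>AA\<^esub> i \<otimes>\<^bsub>AA\<^esub> G0 x"
proof (induction i)
  case 0 then show ?case using G0_closed by simp
next
  case (Suc i)
  have ts: "tt [^]\<^bsub>AA\<^esub> Suc i = tt \<otimes>\<^bsub>AA\<^esub> tt [^]\<^bsub>AA\<^esub> i" by (simp add: A.m_comm)
  then have "tt [^]\<^bsub>AA\<^esub> Suc i \<odot>\<^bsub>M\<^esub> x = tt \<odot>\<^bsub>M\<^esub> (tt [^]\<^bsub>AA\<^esub> i \<odot>\<^bsub>M\<^esub> x)"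
    using Suc.prems by (simp add: MM.smult_assoc1)
  then have "G0 (tt [^]\<^bsub>AA\<^esub> Suc i \<odot>\<^bsub>M\<^esub> x) = tt \<otimes>\<^bsub>AA\<^esub> (tt [^]\<^bsub>AA\<^esub> i \<otimes>\<^bsub>AA\<^esub> G0 x)"
    using G0_tt Suc by simp
  also have "\<dots> = (tt \<otimes>\<^bsub>AA\<^esub> tt [^]\<^bsub>AA\<^esub> i) \<otimes>\<^bsub>AA\<^esub> G0 x"
    using G0_closed Suc.prems by (simp add: A.m_assoc)
  also have "\<dots> = tt [^]\<^bsub>AA\<^esub> Suc i \<otimes>\<^bsub>AA\<^esub> G0 x"
    by (simp only: ts)
  finally show ?case .
qed

lemma G0_lin:
  assumes a: "a \<in> carrier AA"
  shows "\<forall>x\<in>carrier M. G0 (a \<odot>\<^bsub>M\<^esub> x) = a \<otimes>\<^bsub>AA\<^esub> G0 x"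
proof -
  let ?Z = "{a \<in> carrier AA. \<forall>x\<in>carrier M. G0 (a \<odot>\<^bsub>M\<^esub> x) = a \<otimes>\<^bsub>AA\<^esub> G0 x}"
  have "a \<in> ?Z"
  proof (rule A_induct[OF _ _ _ _ a])
    show "\<zero>\<^bsub>AA\<^esub> \<in> ?Z" using G0_closed G0_zero by simp
  next
    fix y z assume "y \<in> ?Z" "z \<in> ?Z"
    then show "y \<oplus>\<^bsub>AA\<^esub> z \<in> ?Z"
      using G0_closed by (simp add: MM.smult_l_distr G0_add A.l_distr)
  next
    show "?Z \<subseteq> carrier AA" by auto
  next
    fix r and i :: nat assume r: "r \<in> carrier R"
    have "G0 ((cc r \<otimes>\<^bsub>AA\<^esub> tt [^]\<^bsub>AA\<^esub> i) \<odot>\<^bsub>M\<^esub> x) = (cc r \<otimes>\<^bsub>AA\<^esub> tt [^]\<^bsub>AA\<^esub> i) \<otimes>\<^bsub>AA\<^esub> G0 x"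
      if x: "x \<in> carrier M" for x
      using r x G0_closed by (simp add: MM.smult_assoc1 G0_cc G0_pow A.m_assoc)
    then show "cc r \<otimes>\<^bsub>AA\<^esub> tt [^]\<^bsub>AA\<^esub> i \<in> ?Z" using r by simp
  qed
  then show ?thesis by simp
qed

lemma G0_nonzero:
  assumes m: "m \<in> carrier M" and fm: "f m \<noteq> \<zero>"
  shows "G0 m \<noteq> \<zero>\<^bsub>AA\<^esub>"
  unfolding G0_def
  by (rule nonvanish[OF n_kk]) (use m fm f_closed in auto)

lemma G0_dual: "restrict G0 (carrier M) \<in> dual_hom AA M"
  unfolding dual_hom_def lin_hom_def self_module_def
  using G0_closed G0_add G0_lin by auto

end


lemma self_module_simps [simp]:
  "carrier (self_module A) = carrier A" "ring.add (self_module A) = ring.add A"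
  "ring.zero (self_module A) = ring.zero A" "module.smult (self_module A) = monoid.mult A"
  unfolding self_module_def by simp_all

lemma dual_zero:
  assumes "cring A" "module A M" "\<phi> \<in> dual_hom A M"
  shows "\<phi> \<zero>\<^bsub>M\<^esub> = \<zero>\<^bsub>A\<^esub>"
proof -
  interpret A: cring A by fact
  interpret M: module A M by fact
  have c: "\<phi> \<zero>\<^bsub>M\<^esub> \<in> carrier A" using assms(3) unfolding dual_hom_def lin_hom_def by auto
  have add: "\<forall>x\<in>carrier M. \<forall>y\<in>carrier M. \<phi> (x \<oplus>\<^bsub>M\<^esub> y) = \<phi> x \<oplus>\<^bsub>A\<^esub> \<phi> y"
    using assms(3) unfolding dual_hom_def lin_hom_def by simp
  then have "\<phi> (\<zero>\<^bsub>M\<^esub> \<oplus>\<^bsub>M\<^esub> \<zero>\<^bsub>M\<^esub>) = \<phi> \<zero>\<^bsub>M\<^esub> \<oplus>\<^bsub>A\<^esub> \<phi> \<zero>\<^bsub>M\<^esub>" by blast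
  then have "\<phi> \<zero>\<^bsub>M\<^esub> = \<phi> \<zero>\<^bsub>M\<^esub> \<oplus>\<^bsub>A\<^esub> \<phi> \<zero>\<^bsub>M\<^esub>" by simp
  then show ?thesis using c by (metis A.add.r_cancel_one' A.zero_closed)
qed

theorem proposition3p5p2:
  fixes R :: "('a, 'r) ring_scheme" and n :: nat and M :: "((nat \<Rightarrow> 'a) set, 'b, 'c) module_scheme"
  assumes "noetherian_domain R"
    and "n \<ge> 1"
    and "module (trunc_poly_ring R n) M"
    and "finite_type (trunc_poly_ring R n) M"
  shows "ker_can_bidual (trunc_poly_ring R n) M = torsion (trunc_poly_ring R n) M"
proof -
  have dom: "domain R" using assms(1) unfolding noetherian_domain_def by blast
  have tm: "tmod R n M" using dom assms(2,3)
    by (simp add: tmod_def tmod_axioms_def trunc_def trunc_axioms_def)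
  interpret T: tmod R n M by (rule tm)
  show ?thesis
  proof (rule equalityI; rule subsetI)
    fix m assume "m \<in> ker_can_bidual T.AA M"
    then have m: "m \<in> carrier M" and k: "can_bidual T.AA M m = (\<lambda>\<phi>\<in>dual_hom T.AA M. \<zero>\<^bsub>T.AA\<^esub>)"
      unfolding ker_can_bidual_def by auto
    show "m \<in> torsion T.AA M"
    proof (rule ccontr)
      assume nt0: "m \<notin> torsion T.AA M"
      have nt: "\<forall>r\<in>carrier R. T.sm r m = \<zero>\<^bsub>M\<^esub> \<longrightarrow> r = \<zero>\<^bsub>R\<^esub>"
      proof (intro ballI impI)
        fix r assume r: "r \<in> carrier R" and e: "T.sm r m = \<zero>\<^bsub>M\<^esub>"
        show "r = \<zero>\<^bsub>R\<^esub>"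
        proof (rule ccontr)
          assume "r \<noteq> \<zero>\<^bsub>R\<^esub>"
          then have "T.cc r \<in> non_zero_divisors T.AA" using T.cc_nzd r by simp
          then have "m \<in> torsion T.AA M" using e m unfolding torsion_def T.sm_def by blast
          then show False using nt0 by simp
        qed
      qed
      obtain G where G: "finite G" "G \<subseteq> carrier M"
        and Ggen: "\<And>x. x \<in> carrier M \<Longrightarrow> \<exists>fg. fg \<in> G \<rightarrow> carrier T.AA \<and> x = (\<Oplus>\<^bsub>M\<^esub> g \<in> G. fg g \<odot>\<^bsub>M\<^esub> g)"
        using assms(4) unfolding finite_type_def by blast
      obtain gs where gs: "set gs = G" using finite_list[OF G(1)] by blast
      define L where "L = concat (map (\<lambda>g. map (\<lambda>i. T.tt [^]\<^bsub>T.AA\<^esub> i \<odot>\<^bsub>M\<^esub> g) [0..<n]) gs)"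
      have setL: "set L = (\<Union>g\<in>G. (\<lambda>i. T.tt [^]\<^bsub>T.AA\<^esub> i \<odot>\<^bsub>M\<^esub> g) ` {0..<n})"
        unfolding L_def gs[symmetric] by simp
      have Lc: "set L \<subseteq> carrier M" unfolding setL using G(2) by auto
      have memL: "T.tt [^]\<^bsub>T.AA\<^esub> i \<odot>\<^bsub>M\<^esub> g \<in> set L" if "i < n" "g \<in> G" for i g
        unfolding setL using that by (intro UN_I[of g]) auto
      have ag: "a \<odot>\<^bsub>M\<^esub> g \<in> T.RM.lsp L" if a: "a \<in> carrier T.AA" and g: "g \<in> G" for a g
      proof -
        have gc: "g \<in> carrier M" using g G(2) by auto
        let ?Z = "{a \<in> carrier T.AA. a \<odot>\<^bsub>M\<^esub> g \<in> T.RM.lsp L}"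
        have "a \<in> ?Z"
        proof (rule T.A_induct[OF _ _ _ _ a])
          show "\<zero>\<^bsub>T.AA\<^esub> \<in> ?Z" using gc T.RM.lsp_zero[OF Lc] by simp
        next
          fix y z assume "y \<in> ?Z" "z \<in> ?Z"
          then show "y \<oplus>\<^bsub>T.AA\<^esub> z \<in> ?Z"
            using gc T.RM.lsp_add[OF Lc] by (simp add: T.MM.smult_l_distr)
        next
          show "?Z \<subseteq> carrier T.AA" by auto
        next
          fix r and i :: nat assume r: "r \<in> carrier R"
          have e: "(T.cc r \<otimes>\<^bsub>T.AA\<^esub> T.tt [^]\<^bsub>T.AA\<^esub> i) \<odot>\<^bsub>M\<^esub> g = T.sm r (T.tt [^]\<^bsub>T.AA\<^esub> i \<odot>\<^bsub>M\<^esub> g)"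
            unfolding T.sm_def using r gc by (simp add: T.MM.smult_assoc1)
          have "T.tt [^]\<^bsub>T.AA\<^esub> i \<odot>\<^bsub>M\<^esub> g \<in> T.RM.lsp L"
          proof (cases "i < n")
            case True
            then have "T.tt [^]\<^bsub>T.AA\<^esub> i \<odot>\<^bsub>M\<^esub> g \<in> set L" using memL g by blast
            then show ?thesis using T.RM.lsp_gen[OF Lc] by simp
          next
            case False
            then have "T.tt [^]\<^bsub>T.AA\<^esub> i = \<zero>\<^bsub>T.AA\<^esub>" using T.tt_pow_n by simp
            then show ?thesis using gc T.RM.lsp_zero[OF Lc] by simp
          qed
          then show "T.cc r \<otimes>\<^bsub>T.AA\<^esub> T.tt [^]\<^bsub>T.AA\<^esub> i \<in> ?Z"
            using e r T.RM.lsp_sm[OF Lc] by simp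
        qed
        then show ?thesis by simp
      qed
      have gen: "carrier M \<subseteq> T.RM.lsp L"
      proof
        fix x assume x: "x \<in> carrier M"
        obtain fg where fg: "fg \<in> G \<rightarrow> carrier T.AA" "x = (\<Oplus>\<^bsub>M\<^esub> g \<in> G. fg g \<odot>\<^bsub>M\<^esub> g)"
          using Ggen[OF x] by blast
        have "(\<Oplus>\<^bsub>M\<^esub> g \<in> G. fg g \<odot>\<^bsub>M\<^esub> g) \<in> T.RM.lsp L"
          by (rule T.MM.finsum_closed_in)
            (use G(1) T.RM.lsp_zero[OF Lc] T.RM.lsp_add[OF Lc] T.RM.lsp_carrier[OF Lc] ag fg(1) in \<open>auto intro!: ag simp: Pi_def\<close>)
        then show "x \<in> T.RM.lsp L" using fg(2) by simp
      qed
      obtain f where f1: "\<forall>x\<in>carrier M. f x \<in> carrier R"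
        and f2: "\<forall>x\<in>carrier M. \<forall>y\<in>carrier M. f (x \<oplus>\<^bsub>M\<^esub> y) = f x \<oplus>\<^bsub>R\<^esub> f y"
        and f3: "\<forall>r\<in>carrier R. \<forall>x\<in>carrier M. f (T.sm r x) = r \<otimes>\<^bsub>R\<^esub> f x"
        and f4: "f m \<noteq> \<zero>\<^bsub>R\<^esub>"
        using T.RM.functional_exists[OF m nt Lc gen] by blast
      have "tfun R n M f" using tm f1 f2 f3 by (simp add: tfun_def tfun_axioms_def)
      then interpret F: tfun R n M f .
      have D: "restrict F.G0 (carrier M) \<in> dual_hom T.AA M" by (rule F.G0_dual)
      have "can_bidual T.AA M m (restrict F.G0 (carrier M)) = F.G0 m"
        unfolding can_bidual_def using D m by simp
      moreover have "can_bidual T.AA M m (restrict F.G0 (carrier M)) = \<zero>\<^bsub>T.AA\<^esub>"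
        using k D by simp
      ultimately show False using F.G0_nonzero[OF m f4] by simp
    qed
  next
    fix m assume "m \<in> torsion T.AA M"
    then obtain \<alpha> where m: "m \<in> carrier M" and al: "\<alpha> \<in> non_zero_divisors T.AA"
      and e: "\<alpha> \<odot>\<^bsub>M\<^esub> m = \<zero>\<^bsub>M\<^esub>"
      unfolding torsion_def by blast
    have alc: "\<alpha> \<in> carrier T.AA" using al unfolding non_zero_divisors_def by auto
    have "\<phi> m = \<zero>\<^bsub>T.AA\<^esub>" if phi: "\<phi> \<in> dual_hom T.AA M" for \<phi>
    proof -
      have "\<phi> (\<alpha> \<odot>\<^bsub>M\<^esub> m) = \<alpha> \<otimes>\<^bsub>T.AA\<^esub> \<phi> m"
        using phi m alc unfolding dual_hom_def lin_hom_def by simp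
      moreover have "\<phi> (\<alpha> \<odot>\<^bsub>M\<^esub> m) = \<zero>\<^bsub>T.AA\<^esub>"
        using e dual_zero[OF T.A.cring_axioms assms(3) phi] by simp
      moreover have "\<phi> m \<in> carrier T.AA"
        using phi m unfolding dual_hom_def lin_hom_def by auto
      ultimately show ?thesis using al unfolding non_zero_divisors_def by auto
    qed
    then show "m \<in> ker_can_bidual T.AA M"
      unfolding ker_can_bidual_def can_bidual_def using m by (auto intro!: restrict_ext)
  qed
qed

end
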